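(* Let $k$ be a fixed non-negative integer. There is an algorithm which, given an arbitrary $n\times n$ matrix $M$ with entries in $\mathbb{Z}_2$, decides whether $R(M)\le k$, and whose running time is $O(n^{k+4})$ (the implied constant may depend on $k$).
   Context: For an $n\times n$ matrix $M$ with entries in $\mathbb{Z}_2$, $R(M)$ denotes the minimal rank (over $\mathbb{Z}_2$) among all matrices obtained from $M$ by changing some (possibly none) of the entries on the main diagonal of $M$, i.e. $R(M)=\min\{\operatorname{rk}(M+D): D \text{ an } n\times n \text{ diagonal matrix over } \mathbb{Z}_2\}$. Complexity is measured in elementary operations on entries of $\mathbb{Z}_2$. *)

theory Defs
  imports "HOL-Library.Z2" "Jordan_Normal_Form.DL_Rank"
begin

definition diag_mat_n :: "nat \<Rightarrow> bit mat \<Rightarrow> bool" where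
  "diag_mat_n n D \<longleftrightarrow> D \<in> carrier_mat n n \<and>
     (\<forall>i<n. \<forall>j<n. i \<noteq> j \<longrightarrow> D $$ (i, j) = 0)"

definition minrank :: "bit mat \<Rightarrow> nat" where
  "minrank M = Min {vec_space.rank (dim_row M) (M + D) | D. diag_mat_n (dim_row M) D}"

text \<open>State: natural-number registers (indices/counters) and a collection of
  two-dimensional bit arrays (memory cell (a,i,j) = entry (i,j) of array a).\<close>

type_synonym state = "(nat \<Rightarrow> nat) \<times> (nat \<Rightarrow> nat \<Rightarrow> nat \<Rightarrow> bool)"

datatype aexp = N nat | V nat | Plus aexp aexp | Minus aexp aexp

datatype bexp = Bc bool | Less aexp aexp | Eq aexp aexp | Not bexp
  | And bexp bexp | Xor bexp bexp | Cell aexp aexp aexp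

datatype com = SKIP | Assign nat aexp | Store aexp aexp aexp bexp
  | Seq com com | If bexp com com | While bexp com

fun aval :: "aexp \<Rightarrow> state \<Rightarrow> nat" where
  "aval (N c) s = c"
| "aval (V x) s = fst s x"
| "aval (Plus a b) s = aval a s + aval b s"
| "aval (Minus a b) s = aval a s - aval b s"

fun bval :: "bexp \<Rightarrow> state \<Rightarrow> bool" where
  "bval (Bc v) s = v"
| "bval (Less a b) s = (aval a s < aval b s)"
| "bval (Eq a b) s = (aval a s = aval b s)"
| "bval (Not b) s = (\<not> bval b s)"
| "bval (And b c) s = (bval b s \<and> bval c s)"
| "bval (Xor b c) s = (bval b s \<noteq> bval c s)"
| "bval (Cell a i j) s = snd s (aval a s) (aval i s) (aval j s)"

inductive big_step :: "com \<Rightarrow> state \<Rightarrow> nat \<Rightarrow> state \<Rightarrow> bool" where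
  Skip: "big_step SKIP s 1 s"
| Assign: "big_step (Assign x a) s 1 ((fst s)(x := aval a s), snd s)"
| Store: "big_step (Store a i j b) s 1
     (fst s, (snd s)(aval a s := (snd s (aval a s))(aval i s := (snd s (aval a s) (aval i s))(aval j s := bval b s))))"
| Seq: "big_step c1 s1 t1 s2 \<Longrightarrow> big_step c2 s2 t2 s3 \<Longrightarrow> big_step (Seq c1 c2) s1 (t1 + t2) s3"
| IfTrue: "bval b s \<Longrightarrow> big_step c1 s t s' \<Longrightarrow> big_step (If b c1 c2) s (t + 1) s'"
| IfFalse: "\<not> bval b s \<Longrightarrow> big_step c2 s t s' \<Longrightarrow> big_step (If b c1 c2) s (t + 1) s'"
| WhileFalse: "\<not> bval b s \<Longrightarrow> big_step (While b c) s 1 s"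
| WhileTrue: "bval b s1 \<Longrightarrow> big_step c s1 t1 s2 \<Longrightarrow> big_step (While b c) s2 t2 s3 \<Longrightarrow>
     big_step (While b c) s1 (1 + t1 + t2) s3"

text \<open>Input encoding: register 0 holds n, array 0 holds the matrix (True = 1),
  everything else is zero/False.  Output: register 1 nonzero means "yes".\<close>

definition init_state :: "nat \<Rightarrow> bit mat \<Rightarrow> state" where
  "init_state n M = ((\<lambda>x. if x = 0 then n else 0),
     (\<lambda>a i j. a = 0 \<and> i < n \<and> j < n \<and> M $$ (i, j) = 1))"

definition accepts :: "state \<Rightarrow> bool" where
  "accepts s \<longleftrightarrow> fst s 1 \<noteq> 0"

end

theory Submission
  imports Defs
begin


context vec_space
begin

lemma li_empty: "lin_indpt {}"
  unfolding lin_dep_def by auto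

lemma rank_le_span:
  assumes A: "A \<in> carrier_mat n nc" and W: "finite W" "W \<subseteq> carrier_vec n"
    and sp: "set (cols A) \<subseteq> span W"
  shows "rank A \<le> card W"
proof -
  obtain S where S: "finite S" "maximal S (\<lambda>T. T \<subseteq> set (cols A) \<and> lin_indpt T)"
    using maximal_exists_superset[of "set (cols A)" "\<lambda>T. T \<subseteq> set (cols A) \<and> lin_indpt T" "{}"]
      li_empty by auto
  have r: "rank A = card S" using rank_card_indpt[OF A S(2)] .
  have "S \<subseteq> set (cols A)" "lin_indpt S" using S(2) unfolding maximal_def by auto
  moreover have "S \<subseteq> span W" using \<open>S \<subseteq> set (cols A)\<close> sp by blast
  ultimately obtain C :: "'a vec set" where "int (card C) \<le> int (card W) - int (card S)"
    using replacement[OF S(1) W(1) W(2) \<open>lin_indpt S\<close>] by blast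
  then show ?thesis using r by linarith
qed

lemma span_basis:
  assumes A: "A \<in> carrier_mat n nc"
  shows "\<exists>S. S \<subseteq> set (cols A) \<and> finite S \<and> card S = rank A \<and> set (cols A) \<subseteq> span S"
proof -
  obtain S where S: "finite S" "maximal S (\<lambda>T. T \<subseteq> set (cols A) \<and> lin_indpt T)"
    using maximal_exists_superset[of "set (cols A)" "\<lambda>T. T \<subseteq> set (cols A) \<and> lin_indpt T" "{}"]
      li_empty by auto
  have r: "rank A = card S" using rank_card_indpt[OF A S(2)] .
  have Ss: "S \<subseteq> set (cols A)" and li: "lin_indpt S" using S(2) unfolding maximal_def by auto
  have cc: "set (cols A) \<subseteq> carrier_vec n" using A cols_dim by blast
  hence Sc: "S \<subseteq> carrier_vec n" using Ss by blast
  have "set (cols A) \<subseteq> span S"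
  proof
    fix c assume c: "c \<in> set (cols A)"
    show "c \<in> span S"
    proof (cases "c \<in> S")
      case True then show ?thesis using in_own_span[OF Sc] by blast
    next
      case False
      show ?thesis
      proof (rule ccontr)
        assume "c \<notin> span S"
        hence "lin_indpt (S \<union> {c})"
          using lin_dep_iff_in_span[OF Sc li _ False] c cc by auto
        moreover have "S \<union> {c} \<subseteq> set (cols A)" using Ss c by auto
        ultimately have "S \<union> {c} = S" using S(2) unfolding maximal_def by blast
        thus False using False by auto
      qed
    qed
  qed
  thus ?thesis using Ss S(1) r by auto
qed

end

definition cv :: "bit mat \<Rightarrow> nat \<Rightarrow> nat \<Rightarrow> bit \<Rightarrow> nat \<Rightarrow> bit" where
  "cv M n x g l = (if l = x then g else if x < n then M $$ (l, x) else 0)"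

lemma bit_cases2: "(a::bit) = 0 \<or> a = 1" using bit_not_zero_iff by blast
lemma bit_add_self: "(a::bit) + (b + a) = b"
  using bit_cases2[of a] bit_cases2[of b] by auto

lemma minrank_le_if:
  assumes M: "M \<in> carrier_mat n n"
    and H: "\<forall>j<n. \<exists>C. \<forall>l<n. l \<noteq> j \<longrightarrow> (\<Sum>i<k. C i * cv M n (X i) (G i) l) = M $$ (l, j)"
  shows "minrank M \<le> k"
proof -
  interpret V: vec_space "TYPE(bit)" n .
  define Cf where "Cf j = (SOME C. \<forall>l<n. l \<noteq> j \<longrightarrow> (\<Sum>i<k. C i * cv M n (X i) (G i) l) = M $$ (l, j))" for j
  have Cf: "\<And>j l. j < n \<Longrightarrow> l < n \<Longrightarrow> l \<noteq> j \<Longrightarrow> (\<Sum>i<k. Cf j i * cv M n (X i) (G i) l) = M $$ (l, j)"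
  proof -
    fix j l assume "j < n" "l < n" "l \<noteq> j"
    from H \<open>j < n\<close> obtain C where "\<forall>l<n. l \<noteq> j \<longrightarrow> (\<Sum>i<k. C i * cv M n (X i) (G i) l) = M $$ (l, j)" by blast
    hence "\<forall>l<n. l \<noteq> j \<longrightarrow> (\<Sum>i<k. Cf j i * cv M n (X i) (G i) l) = M $$ (l, j)"
      unfolding Cf_def by (rule someI[of "\<lambda>C. \<forall>l<n. l \<noteq> j \<longrightarrow> (\<Sum>i<k. C i * cv M n (X i) (G i) l) = M $$ (l, j)"])
    thus "(\<Sum>i<k. Cf j i * cv M n (X i) (G i) l) = M $$ (l, j)" using \<open>l < n\<close> \<open>l \<noteq> j\<close> by blast
  qed
  define dg where "dg j = (\<Sum>i'<k. Cf j i' * cv M n (X i') (G i') j)" for j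
  define D where "D = mat n n (\<lambda>(i, j). if i = j then dg j + M $$ (j, j) else 0)"
  have Dd: "diag_mat_n n D" unfolding diag_mat_n_def D_def by auto
  define A where "A = M + D"
  have A: "A \<in> carrier_mat n n" unfolding A_def D_def using M by auto
  define wv where "wv i = vec n (cv M n (X i) (G i))" for i
  define W where "W = wv ` {..<k}"
  have Wf: "finite W" and Wc: "W \<subseteq> carrier_vec n" and Wk: "card W \<le> k"
    unfolding W_def wv_def using card_image_le[of "{..<k}"] by auto
  have "set (cols A) \<subseteq> V.span W"
  proof
    fix c assume "c \<in> set (cols A)"
    then obtain j where j: "j < n" and c: "c = col A j" using A by (auto simp: cols_def)
    define a where "a w = (\<Sum>i\<in>{i. i < k \<and> wv i = w}. Cf j i)" for w
    have "c = V.lincomb a W"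
    proof (rule eq_vecI)
      show "dim_vec c = dim_vec (V.lincomb a W)" using c A V.lincomb_dim[OF Wf Wc] by auto
      fix l assume "l < dim_vec (V.lincomb a W)"
      hence l: "l < n" using V.lincomb_dim[OF Wf Wc] by auto
      have "V.lincomb a W $ l = (\<Sum>w\<in>W. a w * w $ l)" using V.lincomb_index[OF l Wc] .
      also have "\<dots> = (\<Sum>w\<in>W. \<Sum>i\<in>{i\<in>{..<k}. wv i = w}. Cf j i * wv i $ l)"
        unfolding a_def sum_distrib_right by (intro sum.cong) auto
      also have "\<dots> = (\<Sum>i<k. Cf j i * wv i $ l)"
        by (rule sum.group) (auto simp: W_def)
      also have "\<dots> = (\<Sum>i<k. Cf j i * cv M n (X i) (G i) l)" using l by (simp add: wv_def)
      also have "\<dots> = c $ l"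
      proof (cases "l = j")
        case True
        have "c $ l = dg j" using c l j M True bit_cases2[of "dg j"] bit_cases2[of "M $$ (j,j)"] unfolding A_def D_def by auto
        then show ?thesis using True unfolding dg_def by simp
      next
        case False
        then show ?thesis using c l j M Cf[OF j l False] unfolding A_def D_def by simp
      qed
      finally show "c $ l = V.lincomb a W $ l" by simp
    qed
    moreover have "V.lincomb a W \<in> V.span W"
      unfolding V.span_def using Wf by auto
    ultimately show "c \<in> V.span W" by simp
  qed
  hence r: "V.rank A \<le> k" using V.rank_le_span[OF A Wf Wc] Wk by linarith
  have fin: "finite {V.rank (M + D) | D. diag_mat_n n D}"
  proof (rule finite_subset[of _ "{..n}"])
    show "{V.rank (M + D) | D. diag_mat_n n D} \<subseteq> {..n}"
    proof
      fix x assume "x \<in> {V.rank (M + D) | D. diag_mat_n n D}"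
      then obtain D' where "x = V.rank (M + D')" "diag_mat_n n D'" by blast
      moreover have "M + D' \<in> carrier_mat n n" using M \<open>diag_mat_n n D'\<close> unfolding diag_mat_n_def by auto
      ultimately show "x \<in> {..n}" using V.rank_le_nc by auto
    qed
  qed auto
  have "minrank M \<le> V.rank A"
    unfolding minrank_def A_def using M Dd fin by (auto intro!: Min_le)
  thus ?thesis using r by linarith
qed


lemma minrank_le_only_if:
  assumes M: "M \<in> carrier_mat n n" and mk: "minrank M \<le> k"
  shows "\<exists>X G. (\<forall>i<k. X i \<le> n) \<and>
     (\<forall>j<n. \<exists>C. \<forall>l<n. l \<noteq> j \<longrightarrow> (\<Sum>i<k. C i * cv M n (X i) (G i) l) = M $$ (l, j))"
proof -
  interpret V: vec_space "TYPE(bit)" n .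
  have fin: "finite {V.rank (M + D) | D. diag_mat_n n D}"
  proof (rule finite_subset[of _ "{..n}"])
    show "{V.rank (M + D) | D. diag_mat_n n D} \<subseteq> {..n}"
    proof
      fix x assume "x \<in> {V.rank (M + D) | D. diag_mat_n n D}"
      then obtain D' where "x = V.rank (M + D')" "diag_mat_n n D'" by blast
      moreover have "M + D' \<in> carrier_mat n n" using M \<open>diag_mat_n n D'\<close> unfolding diag_mat_n_def by auto
      ultimately show "x \<in> {..n}" using V.rank_le_nc by auto
    qed
  qed auto
  have ne: "{V.rank (M + D) | D. diag_mat_n n D} \<noteq> {}"
    using diag_mat_n_def[of n "0\<^sub>m n n"] by auto
  have "minrank M \<in> {V.rank (M + D) | D. diag_mat_n n D}"
    unfolding minrank_def using M Min_in[OF fin ne] by auto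
  then obtain D where Dd: "diag_mat_n n D" and rD: "V.rank (M + D) \<le> k" using mk by auto
  define A where "A = M + D"
  have A: "A \<in> carrier_mat n n" unfolding A_def using M Dd unfolding diag_mat_n_def by auto
  have Aoff: "\<And>l x. l < n \<Longrightarrow> x < n \<Longrightarrow> l \<noteq> x \<Longrightarrow> A $$ (l, x) = M $$ (l, x)"
    using M Dd unfolding A_def diag_mat_n_def by auto
  obtain S where Ss: "S \<subseteq> set (cols A)" and Sf: "finite S" and Sc: "card S = V.rank A"
    and Sp: "set (cols A) \<subseteq> V.span S"
    using V.span_basis[OF A] by blast
  have Svec: "S \<subseteq> carrier_vec n" using Ss A cols_dim by blast
  obtain ss where ss: "set ss = S" "distinct ss" using finite_distinct_list[OF Sf] by blast
  have len: "length ss \<le> k" using Sc rD ss distinct_card[OF ss(2)] unfolding A_def by simp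
  have ex: "\<exists>x. x < n \<and> ss ! i = col A x" if "i < length ss" for i
  proof -
    have "ss ! i \<in> set (cols A)" using Ss ss that nth_mem by blast
    thus ?thesis using A by (auto simp: cols_def)
  qed
  define X where "X i = (if i < length ss then (SOME x. x < n \<and> ss ! i = col A x) else n)" for i
  define G where "G i = (if i < length ss then A $$ (X i, X i) else 0)" for i
  have Xp: "X i < n \<and> ss ! i = col A (X i)" if "i < length ss" for i
    using someI_ex[OF ex[OF that]] that unfolding X_def by simp
  have cvS: "cv M n (X i) (G i) l = ss ! i $ l" if "i < length ss" "l < n" for i l
  proof -
    have "ss ! i $ l = A $$ (l, X i)" using Xp[OF that(1)] that(2) A by simp
    thus ?thesis using Xp[OF that(1)] that(2) Aoff[of l "X i"] unfolding cv_def G_def using that(1) by auto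
  qed
  have cv0: "cv M n (X i) (G i) l = 0" if "\<not> i < length ss" "l < n" for i l
    using that unfolding cv_def X_def G_def by auto
  show ?thesis
  proof (intro exI conjI)
    show "\<forall>i<k. X i \<le> n"
    proof (intro allI impI)
      fix i assume "i < k"
      show "X i \<le> n"
      proof (cases "i < length ss")
        case True then show ?thesis using Xp[OF True] by simp
      next
        case False then show ?thesis unfolding X_def by simp
      qed
    qed
    show "\<forall>j<n. \<exists>C. \<forall>l<n. l \<noteq> j \<longrightarrow> (\<Sum>i<k. C i * cv M n (X i) (G i) l) = M $$ (l, j)"
    proof (intro allI impI)
    fix j assume j: "j < n"
    have "col A j \<in> set (cols A)" using j A by (auto simp: cols_def)
    hence "col A j \<in> V.span S" using Sp by blast
    then obtain a where a: "V.lincomb a S = col A j"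
      using V.finite_in_span[OF Sf Svec] by auto
    define C where "C i = (if i < length ss then a (ss ! i) else 0)" for i
    show "\<exists>C. \<forall>l<n. l \<noteq> j \<longrightarrow> (\<Sum>i<k. C i * cv M n (X i) (G i) l) = M $$ (l, j)"
    proof (intro exI allI impI)
      fix l assume l: "l < n" and lj: "l \<noteq> j"
      have "(\<Sum>i<k. C i * cv M n (X i) (G i) l) = (\<Sum>i<length ss. C i * cv M n (X i) (G i) l)"
      proof (rule sum.mono_neutral_right)
        show "{..<length ss} \<subseteq> {..<k}" using len by auto
        show "\<forall>i\<in>{..<k} - {..<length ss}. C i * cv M n (X i) (G i) l = 0"
          using cv0 l by auto
      qed auto
      also have "\<dots> = (\<Sum>i<length ss. a (ss ! i) * ss ! i $ l)"
        using cvS l unfolding C_def by (intro sum.cong) auto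
      also have "\<dots> = (\<Sum>s\<in>S. a s * s $ l)"
        using sum.distinct_set_conv_list[OF ss(2), of "\<lambda>s. a s * s $ l"] ss(1)
        by (simp add: sum_list_sum_nth atLeast0LessThan)
      also have "\<dots> = V.lincomb a S $ l" using V.lincomb_index[OF l Svec] by simp
      also have "\<dots> = A $$ (l, j)" using a l j A by simp
      also have "\<dots> = M $$ (l, j)" using Aoff[OF l j lj] .
      finally show "(\<Sum>i<k. C i * cv M n (X i) (G i) l) = M $$ (l, j)" .
    qed
    qed
  qed
qed




definition upd :: "state \<Rightarrow> nat \<Rightarrow> nat \<Rightarrow> state" where
  "upd s x v = ((fst s)(x := v), snd s)"

definition indep :: "(state \<Rightarrow> bool) \<Rightarrow> nat set \<Rightarrow> bool" where
  "indep P W \<longleftrightarrow> (\<forall>s s'. snd s = snd s' \<longrightarrow> (\<forall>y. y \<notin> W \<longrightarrow> fst s y = fst s' y) \<longrightarrow> P s = P s')"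

definition compt :: "nat \<Rightarrow> com \<Rightarrow> nat set \<Rightarrow> nat \<Rightarrow> (state \<Rightarrow> bool) \<Rightarrow> nat \<Rightarrow> bool" where
  "compt n c W r P T \<longleftrightarrow> (\<forall>s. fst s 0 = n \<longrightarrow> (\<exists>t s'. big_step c s t s' \<and> t \<le> T \<and> snd s' = snd s \<and>
      (\<forall>y. y \<notin> W \<longrightarrow> fst s' y = fst s y) \<and> (fst s' r \<noteq> 0 \<longleftrightarrow> P s)))"

lemma indep_mono: "indep P B \<Longrightarrow> A \<subseteq> B \<Longrightarrow> indep P A"
  unfolding indep_def by blast

lemma Assign': "s' = ((fst s)(x := aval a s), snd s) \<Longrightarrow> big_step (Assign x a) s 1 s'"
  using Assign by simp
lemma IfTrue': "bval b s \<Longrightarrow> big_step c1 s t s' \<Longrightarrow> t' = t + 1 \<Longrightarrow> big_step (If b c1 c2) s t' s'"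
  using IfTrue by simp
lemma IfFalse': "\<not> bval b s \<Longrightarrow> big_step c2 s t s' \<Longrightarrow> t' = t + 1 \<Longrightarrow> big_step (If b c1 c2) s t' s'"
  using IfFalse by simp
lemma Seq': "big_step c1 s1 t1 s2 \<Longrightarrow> big_step c2 s2 t2 s3 \<Longrightarrow> t = t1 + t2 \<Longrightarrow> big_step (Seq c1 c2) s1 t s3"
  using Seq by simp

definition base :: "bexp \<Rightarrow> nat \<Rightarrow> com" where
  "base b r = If b (Assign r (N 1)) (Assign r (N 0))"

lemma comp_base: "compt n (base b r) {r} r (bval b) 2"
  unfolding compt_def base_def
proof (intro allI impI)
  fix s :: state
  show "\<exists>t s'. big_step (If b (Assign r (N 1)) (Assign r (N 0))) s t s' \<and> t \<le> 2 \<and> snd s' = snd s \<and>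
      (\<forall>y. y \<notin> {r} \<longrightarrow> fst s' y = fst s y) \<and> (fst s' r \<noteq> 0 \<longleftrightarrow> bval b s)"
  proof (cases "bval b s")
    case True
    have "big_step (If b (Assign r (N 1)) (Assign r (N 0))) s 2 ((fst s)(r := 1), snd s)"
      by (rule IfTrue'[OF True Assign']) auto
    then show ?thesis using True by (intro exI[of _ 2] exI[of _ "((fst s)(r := 1), snd s)"] conjI) auto
  next
    case False
    have "big_step (If b (Assign r (N 1)) (Assign r (N 0))) s 2 ((fst s)(r := 0), snd s)"
      by (rule IfFalse'[OF False Assign']) auto
    then show ?thesis using False by (intro exI[of _ 2] exI[of _ "((fst s)(r := 0), snd s)"] conjI) auto
  qed
qed

definition Q :: "bool \<Rightarrow> nat \<Rightarrow> (nat \<Rightarrow> bool) \<Rightarrow> bool" where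
  "Q pol B f = (if pol then (\<exists>v<B. f v) else (\<forall>v<B. f v))"

definition loop :: "bool \<Rightarrow> nat \<Rightarrow> aexp \<Rightarrow> com \<Rightarrow> nat \<Rightarrow> nat \<Rightarrow> com" where
  "loop pol x bnd body rb r = Seq (Assign r (N (if pol then 0 else 1))) (Seq (Assign x (N 0))
    (While (Less (V x) bnd) (Seq body (Seq (If (Eq (V rb) (N 0)) (if pol then SKIP else Assign r (N 0))
       (if pol then Assign r (N 1) else SKIP)) (Assign x (Plus (V x) (N 1)))))))"

lemma Q_Suc: "Q pol (Suc i) f = (if pol then Q pol i f \<or> f i else Q pol i f \<and> f i)"
  unfolding Q_def by (auto simp: less_Suc_eq)

lemma comp_loop:
  assumes body: "compt n body Wb rb Pb Tb"
    and xW: "x \<notin> Wb" and rW: "r \<notin> Wb" and xr: "x \<noteq> r" and x0: "x \<noteq> 0" and r0: "r \<noteq> 0"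
    and W0: "0 \<notin> Wb" and ind: "indep Pb (insert r Wb)"
    and bnd: "\<forall>s. fst s 0 = n \<longrightarrow> aval bnd s = B"
  shows "compt n (loop pol x bnd body rb r) (insert x (insert r Wb)) r (\<lambda>s. Q pol B (\<lambda>v. Pb (upd s x v))) (3 + B * (Tb + 4))"
  unfolding compt_def
proof (intro allI impI)
  fix s :: state assume s0: "fst s 0 = n"
  define W where "W = insert x (insert r Wb)"
  define I where "I i s' \<longleftrightarrow> snd s' = snd s \<and> (\<forall>y. y \<notin> W \<longrightarrow> fst s' y = fst s y) \<and> fst s' x = i \<and>
      (fst s' r \<noteq> 0 \<longleftrightarrow> Q pol i (\<lambda>v. Pb (upd s x v)))" for i s'
  define wb where "wb = Seq body (Seq (If (Eq (V rb) (N 0)) (if pol then SKIP else Assign r (N 0))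
       (if pol then Assign r (N 1) else SKIP)) (Assign x (Plus (V x) (N 1))))"
  have step: "\<forall>s'. I (B - m) s' \<longrightarrow> m \<le> B \<longrightarrow> (\<exists>t s''. big_step (While (Less (V x) bnd) wb) s' t s'' \<and>
       t \<le> 1 + m * (Tb + 4) \<and> I B s'')" for m
  proof (induction m)
    case 0
    show ?case
    proof (intro allI impI)
      fix s' assume I: "I (B - 0) s'"
      have "fst s' 0 = n" using I s0 x0 W0 r0 unfolding I_def W_def by auto
      hence "aval bnd s' = B" using bnd by blast
      moreover have "fst s' x = B" using I unfolding I_def by simp
      ultimately have "\<not> bval (Less (V x) bnd) s'" by simp
      thus "\<exists>t s''. big_step (While (Less (V x) bnd) wb) s' t s'' \<and> t \<le> 1 + 0 * (Tb + 4) \<and> I B s''"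
        using I by (intro exI[of _ 1] exI[of _ s'] conjI WhileFalse) auto
    qed
  next
    case (Suc m)
    show ?case
    proof (intro allI impI)
      fix s' assume I: "I (B - Suc m) s'" and mB: "Suc m \<le> B"
      define i where "i = B - Suc m"
      have iB: "i < B" "Suc i = B - m" using mB unfolding i_def by auto
      have n': "fst s' 0 = n" using I s0 x0 W0 r0 unfolding I_def W_def by auto
      hence "aval bnd s' = B" using bnd by blast
      moreover have "fst s' x = i" using I unfolding I_def i_def by simp
      ultimately have tst: "bval (Less (V x) bnd) s'" using iB by simp
      obtain t1 s1 where b1: "big_step body s' t1 s1" "t1 \<le> Tb" "snd s1 = snd s'"
        "\<forall>y. y \<notin> Wb \<longrightarrow> fst s1 y = fst s' y" "fst s1 rb \<noteq> 0 \<longleftrightarrow> Pb s'"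
        using body n' unfolding compt_def by blast
      have "Pb s' = Pb (upd s x i)"
        using ind unfolding indep_def
      proof (elim allE impE)
        show "snd s' = snd (upd s x i)" using I unfolding I_def upd_def by simp
        show "\<forall>y. y \<notin> insert r Wb \<longrightarrow> fst s' y = fst (upd s x i) y"
          using I unfolding I_def upd_def W_def i_def by auto
      qed
      hence Pb1: "fst s1 rb \<noteq> 0 \<longleftrightarrow> Pb (upd s x i)" using b1 by simp
      define s2 where "s2 = (if pol then (if fst s1 rb = 0 then s1 else ((fst s1)(r := 1), snd s1))
                               else (if fst s1 rb = 0 then ((fst s1)(r := 0), snd s1) else s1))"
      have b2: "big_step (If (Eq (V rb) (N 0)) (if pol then SKIP else Assign r (N 0))
       (if pol then Assign r (N 1) else SKIP)) s1 2 s2"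
      proof (cases pol)
        case True
        show ?thesis
        proof (cases "fst s1 rb = 0")
          case T2: True
          show ?thesis unfolding s2_def using True T2 by simp (intro IfTrue'[OF _ Skip], auto)
        next
          case F2: False
          show ?thesis unfolding s2_def using True F2 by simp (intro IfFalse'[OF _ Assign'], auto)
        qed
      next
        case False
        show ?thesis
        proof (cases "fst s1 rb = 0")
          case T2: True
          show ?thesis unfolding s2_def using False T2 by simp (intro IfTrue'[OF _ Assign'], auto)
        next
          case F2: False
          show ?thesis unfolding s2_def using False F2 by simp (intro IfFalse'[OF _ Skip], auto)
        qed
      qed
      define s3 where "s3 = ((fst s2)(x := Suc i), snd s2)"
      have xs1: "fst s1 x = i" using b1 I xW unfolding I_def i_def by auto
      have xs2: "fst s2 x = i" using xs1 xr unfolding s2_def by auto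
      have b3: "big_step (Assign x (Plus (V x) (N 1))) s2 1 s3"
        using Assign[of x "Plus (V x) (N 1)" s2] xs2 unfolding s3_def by simp
      have I3: "I (Suc i) s3"
        unfolding I_def
      proof (intro conjI)
        show "snd s3 = snd s" using b1 I unfolding s3_def s2_def I_def by auto
        show "\<forall>y. y \<notin> W \<longrightarrow> fst s3 y = fst s y"
          using b1 I unfolding s3_def s2_def I_def W_def by auto
        show "fst s3 x = Suc i" unfolding s3_def by simp
        have rs1: "fst s1 r = fst s' r" using b1 rW by auto
        show "(fst s3 r \<noteq> 0) = Q pol (Suc i) (\<lambda>v. Pb (upd s x v))"
          using I Pb1 rs1 xr unfolding s3_def s2_def Q_Suc I_def i_def by auto
      qed
      have "I (B - m) s3" using I3 iB(2) by simp
      moreover have "m \<le> B" using mB by simp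
      ultimately obtain t s'' where rest: "big_step (While (Less (V x) bnd) wb) s3 t s''" "t \<le> 1 + m * (Tb + 4)" "I B s''"
        using Suc.IH by blast
      have "big_step wb s' (t1 + (2 + 1)) s3"
        unfolding wb_def by (rule Seq[OF b1(1) Seq[OF b2 b3]])
      hence "big_step (While (Less (V x) bnd) wb) s' (1 + (t1 + (2 + 1)) + t) s''"
        by (rule WhileTrue[OF tst _ rest(1)])
      moreover have "1 + (t1 + (2 + 1)) + t \<le> 1 + Suc m * (Tb + 4)" using b1(2) rest(2) by simp
      ultimately show "\<exists>t s''. big_step (While (Less (V x) bnd) wb) s' t s'' \<and> t \<le> 1 + Suc m * (Tb + 4) \<and> I B s''"
        using rest(3) by blast
    qed
  qed
  define s0' where "s0' = ((fst s)(r := (if pol then 0 else 1), x := 0), snd s)"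
  define sa where "sa = ((fst s)(r := (if pol then 0 else 1)), snd s)"
  have a1: "big_step (Assign r (N (if pol then 0 else 1))) s 1 sa" unfolding sa_def by (rule Assign') simp
  have a2: "big_step (Assign x (N 0)) sa 1 s0'" unfolding sa_def s0'_def by (rule Assign') simp
  have I0: "I 0 s0'" unfolding I_def s0'_def W_def Q_def using xr by auto
  have I0': "I (B - B) s0'" using I0 by simp
  obtain t s'' where w: "big_step (While (Less (V x) bnd) wb) s0' t s''" "t \<le> 1 + B * (Tb + 4)" "I B s''"
    using step[of B] I0' by blast
  have "big_step (loop pol x bnd body rb r) s (1 + (1 + t)) s''"
    unfolding loop_def wb_def[symmetric] by (rule Seq'[OF a1 Seq'[OF a2 w(1)]]) auto
  thus "\<exists>t s'. big_step (loop pol x bnd body rb r) s t s' \<and> t \<le> 3 + B * (Tb + 4) \<and> snd s' = snd s \<and>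
      (\<forall>y. y \<notin> insert x (insert r Wb) \<longrightarrow> fst s' y = fst s y) \<and>
      (fst s' r \<noteq> 0) = Q pol B (\<lambda>v. Pb (upd s x v))"
    using w(2,3) unfolding I_def W_def by (intro exI[of _ "1 + (1 + t)"] exI[of _ s'']) auto
qed


fun nres :: "(nat \<times> aexp \<times> nat) list \<Rightarrow> nat \<Rightarrow> nat" where
  "nres [] rb = rb"
| "nres ((x, b, B) # xs) rb = Suc x"

fun nest :: "bool \<Rightarrow> (nat \<times> aexp \<times> nat) list \<Rightarrow> com \<Rightarrow> nat \<Rightarrow> com" where
  "nest pol [] body rb = body"
| "nest pol ((x, b, B) # xs) body rb = loop pol x b (nest pol xs body rb) (nres xs rb) (Suc x)"

fun nW :: "(nat \<times> aexp \<times> nat) list \<Rightarrow> nat set \<Rightarrow> nat set" where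
  "nW [] Wb = Wb"
| "nW ((x, b, B) # xs) Wb = insert x (insert (Suc x) (nW xs Wb))"

fun Qn :: "bool \<Rightarrow> (nat \<times> aexp \<times> nat) list \<Rightarrow> (state \<Rightarrow> bool) \<Rightarrow> state \<Rightarrow> bool" where
  "Qn pol [] P s = P s"
| "Qn pol ((x, b, B) # xs) P s = Q pol B (\<lambda>v. Qn pol xs P (upd s x v))"

fun nT :: "(nat \<times> aexp \<times> nat) list \<Rightarrow> nat \<Rightarrow> nat" where
  "nT [] T = T"
| "nT ((x, b, B) # xs) T = 3 + B * (nT xs T + 4)"

lemma nW_eq: "nW xs Wb = Wb \<union> fst ` set xs \<union> Suc ` fst ` set xs"
  by (induction xs Wb rule: nW.induct) auto

lemma indep_Qn: "indep P W \<Longrightarrow> indep (Qn pol xs P) (W \<union> fst ` set xs)"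
proof (induction xs arbitrary: W)
  case Nil
  then show ?case by simp
next
  case (Cons a xs)
  obtain x b B where a: "a = (x, b, B)" by (cases a) auto
  have IH: "indep (Qn pol xs P) (W \<union> fst ` set xs)" using Cons by blast
  show ?case unfolding indep_def
  proof (intro allI impI)
    fix s s' :: state
    assume sn: "snd s = snd s'" and ag: "\<forall>y. y \<notin> W \<union> fst ` set (a # xs) \<longrightarrow> fst s y = fst s' y"
    have "Qn pol xs P (upd s x v) = Qn pol xs P (upd s' x v)" for v
      using IH unfolding indep_def
    proof (elim allE impE)
      show "snd (upd s x v) = snd (upd s' x v)" using sn by (simp add: upd_def)
      show "\<forall>y. y \<notin> W \<union> fst ` set xs \<longrightarrow> fst (upd s x v) y = fst (upd s' x v) y"
        using ag a by (auto simp: upd_def)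
    qed
    then show "Qn pol (a # xs) P s = Qn pol (a # xs) P s'" using a by simp
  qed
qed

lemma comp_nest:
  assumes body: "compt n body Wb rb P Tb" and W0: "0 \<notin> Wb"
    and ind: "indep P (Wb \<union> Suc ` fst ` set xs)"
    and dist: "distinct (map fst xs)"
    and vars: "\<forall>x\<in>fst ` set xs. even x \<and> x \<noteq> 0 \<and> x \<notin> Wb \<and> Suc x \<notin> Wb"
    and bnds: "\<forall>(x, b, B)\<in>set xs. \<forall>s. fst s 0 = n \<longrightarrow> aval b s = B"
  shows "compt n (nest pol xs body rb) (nW xs Wb) (nres xs rb) (Qn pol xs P) (nT xs Tb)"
  using ind dist vars bnds
proof (induction xs)
  case Nil
  then show ?case using body by simp
next
  case (Cons a xs)
  obtain x b B where a: "a = (x, b, B)" by (cases a) auto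
  have IH: "compt n (nest pol xs body rb) (nW xs Wb) (nres xs rb) (Qn pol xs P) (nT xs Tb)"
    using Cons.IH Cons.prems a by (auto intro: indep_mono)
  have xe: "even x" "x \<noteq> 0" "x \<notin> Wb" "Suc x \<notin> Wb" using Cons.prems(3) a by auto
  have xn: "x \<notin> fst ` set xs" using Cons.prems(2) a by auto
  have ev: "\<forall>y\<in>fst ` set xs. even y" using Cons.prems(3) by auto
  have nS: "x \<notin> Suc ` fst ` set xs"
  proof
    assume "x \<in> Suc ` fst ` set xs"
    then obtain y where "y \<in> fst ` set xs" "x = Suc y" by blast
    thus False using ev xe(1) by auto
  qed
  have nS2: "Suc x \<notin> fst ` set xs"
  proof
    assume "Suc x \<in> fst ` set xs"
    hence "even (Suc x)" using ev by blast
    thus False using xe(1) by simp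
  qed
  have c1: "x \<notin> nW xs Wb" using xe xn nS unfolding nW_eq by auto
  have c2: "Suc x \<notin> nW xs Wb" using xe xn nS2 unfolding nW_eq by auto
  have c3: "0 \<notin> nW xs Wb" using W0 Cons.prems(3) unfolding nW_eq by auto
  have c4: "indep (Qn pol xs P) (insert (Suc x) (nW xs Wb))"
  proof (rule indep_mono)
    show "indep (Qn pol xs P) ((Wb \<union> Suc ` fst ` set (a # xs)) \<union> fst ` set xs)"
      by (rule indep_Qn[OF Cons.prems(1)])
    show "insert (Suc x) (nW xs Wb) \<subseteq> (Wb \<union> Suc ` fst ` set (a # xs)) \<union> fst ` set xs"
      unfolding nW_eq a by auto
  qed
  have c5: "\<forall>s. fst s 0 = n \<longrightarrow> aval b s = B" using Cons.prems(4) a by auto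
  have "compt n (loop pol x b (nest pol xs body rb) (nres xs rb) (Suc x)) (insert x (insert (Suc x) (nW xs Wb))) (Suc x)
     (\<lambda>s. Q pol B (\<lambda>v. Qn pol xs P (upd s x v))) (3 + B * (nT xs Tb + 4))"
    by (rule comp_loop[OF IH c1 c2 _ xe(2) _ c3 c4 c5]) auto
  then show ?case using a by simp
qed

definition setr :: "state \<Rightarrow> nat set \<Rightarrow> (nat \<Rightarrow> nat) \<Rightarrow> state" where
  "setr s Vs f = ((\<lambda>y. if y \<in> Vs then f y else fst s y), snd s)"

lemma setr_upd: "x \<notin> Vs \<Longrightarrow> (\<forall>y\<in>Vs. g y = f y) \<Longrightarrow> g x = v \<Longrightarrow> setr (upd s x v) Vs f = setr s (insert x Vs) g"
  unfolding setr_def upd_def by (auto simp: fun_eq_iff)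

lemma Qn_char:
  assumes "distinct (map fst xs)"
  shows "Qn pol xs P s \<longleftrightarrow> (if pol then (\<exists>f. (\<forall>(x, b, B)\<in>set xs. f x < B) \<and> P (setr s (fst ` set xs) f))
     else (\<forall>f. (\<forall>(x, b, B)\<in>set xs. f x < B) \<longrightarrow> P (setr s (fst ` set xs) f)))"
  using assms
proof (induction xs arbitrary: s)
  case Nil
  have "setr s {} f = s" for f unfolding setr_def by simp
  then show ?case by simp
next
  case (Cons a xs)
  obtain x b B where a: "a = (x, b, B)" by (cases a) auto
  have xn: "x \<notin> fst ` set xs" and d: "distinct (map fst xs)" using Cons.prems a by auto
  note IH = Cons.IH[OF d]
  define Vs where "Vs = fst ` set xs"
  have key: "setr (upd s x v) Vs f = setr s (insert x Vs) (f(x := v))" for f v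
    by (rule setr_upd) (use xn Vs_def in auto)
  have key2: "setr (upd s x (g x)) Vs g = setr s (insert x Vs) g" for g
    by (rule setr_upd) (use xn Vs_def in auto)
  show ?case
  proof (cases pol)
    case True
    have "Qn pol (a # xs) P s \<longleftrightarrow> (\<exists>v<B. \<exists>f. (\<forall>(x, b, B)\<in>set xs. f x < B) \<and> P (setr (upd s x v) Vs f))"
      using a True IH unfolding Vs_def by (simp add: Q_def)
    also have "\<dots> \<longleftrightarrow> (\<exists>g. (\<forall>(y, b, B)\<in>set (a # xs). g y < B) \<and> P (setr s (insert x Vs) g))"
    proof
      assume "\<exists>v<B. \<exists>f. (\<forall>(x, b, B)\<in>set xs. f x < B) \<and> P (setr (upd s x v) Vs f)"
      then obtain v f where vf: "v < B" "\<forall>(x, b, B)\<in>set xs. f x < B" "P (setr (upd s x v) Vs f)" by blast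
      have "\<forall>(y, b, B)\<in>set (a # xs). (f(x := v)) y < B"
        using vf(1,2) xn a by (force simp: image_iff)
      moreover have "P (setr s (insert x Vs) (f(x := v)))" using vf(3) key[of v f] by simp
      ultimately show "\<exists>g. (\<forall>(y, b, B)\<in>set (a # xs). g y < B) \<and> P (setr s (insert x Vs) g)"
        by blast
    next
      assume "\<exists>g. (\<forall>(y, b, B)\<in>set (a # xs). g y < B) \<and> P (setr s (insert x Vs) g)"
      then obtain g where g: "\<forall>(y, b, B)\<in>set (a # xs). g y < B" "P (setr s (insert x Vs) g)" by blast
      have "g x < B" using g(1) a by auto
      moreover have "\<forall>(x, b, B)\<in>set xs. g x < B" using g(1) by auto
      moreover have "P (setr (upd s x (g x)) Vs g)" using g(2) key2[of g] by simp
      ultimately show "\<exists>v<B. \<exists>f. (\<forall>(x, b, B)\<in>set xs. f x < B) \<and> P (setr (upd s x v) Vs f)"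
        by blast
    qed
    finally show ?thesis using True a Vs_def by simp
  next
    case False
    have "Qn pol (a # xs) P s \<longleftrightarrow> (\<forall>v<B. \<forall>f. (\<forall>(x, b, B)\<in>set xs. f x < B) \<longrightarrow> P (setr (upd s x v) Vs f))"
      using a False IH unfolding Vs_def by (simp add: Q_def)
    also have "\<dots> \<longleftrightarrow> (\<forall>g. (\<forall>(y, b, B)\<in>set (a # xs). g y < B) \<longrightarrow> P (setr s (insert x Vs) g))"
    proof
      assume H: "\<forall>v<B. \<forall>f. (\<forall>(x, b, B)\<in>set xs. f x < B) \<longrightarrow> P (setr (upd s x v) Vs f)"
      show "\<forall>g. (\<forall>(y, b, B)\<in>set (a # xs). g y < B) \<longrightarrow> P (setr s (insert x Vs) g)"
      proof (intro allI impI)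
        fix g assume g: "\<forall>(y, b, B)\<in>set (a # xs). g y < B"
        have "g x < B" using g a by auto
        moreover have "\<forall>(x, b, B)\<in>set xs. g x < B" using g by auto
        ultimately have "P (setr (upd s x (g x)) Vs g)" using H by blast
        thus "P (setr s (insert x Vs) g)" using key2[of g] by simp
      qed
    next
      assume H: "\<forall>g. (\<forall>(y, b, B)\<in>set (a # xs). g y < B) \<longrightarrow> P (setr s (insert x Vs) g)"
      show "\<forall>v<B. \<forall>f. (\<forall>(x, b, B)\<in>set xs. f x < B) \<longrightarrow> P (setr (upd s x v) Vs f)"
      proof (intro allI impI)
        fix v f assume v: "v < B" and f: "\<forall>(x, b, B)\<in>set xs. f x < B"
        have "\<forall>(y, b, B)\<in>set (a # xs). (f(x := v)) y < B"
          using v f xn a by (force simp: image_iff)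
        then show "P (setr (upd s x v) Vs f)" using H key by auto
      qed
    qed
    finally show ?thesis using False a Vs_def by simp
  qed
qed

lemma nT_bound: "nT xs T + 1 \<le> prod_list (map (\<lambda>(x, b, B). 8 * (B + 1)) xs) * (T + 1)"
proof (induction xs)
  case Nil
  then show ?case by simp
next
  case (Cons a xs)
  obtain x b B where a: "a = (x, b, B)" by (cases a) auto
  define X where "X = prod_list (map (\<lambda>(x, b, B). 8 * (B + 1)) xs) * (T + 1)"
  have h: "nT xs T + 1 \<le> X" using Cons.IH unfolding X_def .
  hence X1: "1 \<le> X" by simp
  have "nT (a # xs) T + 1 = 4 + B * (nT xs T + 1) + 3 * B" using a by (simp add: algebra_simps)
  also have "\<dots> \<le> 4 + B * X + 3 * B" using mult_le_mono2[OF h, of B] by simp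
  also have "\<dots> \<le> 8 * (B + 1) * X"
  proof -
    have a1: "3 \<le> 7 * X" "4 \<le> 8 * X" using X1 by auto
    have "B * 3 \<le> B * (7 * X)" using mult_le_mono2[OF a1(1)] .
    hence "4 + B * X + 3 * B \<le> 8 * X + B * X + B * (7 * X)" using a1(2) by linarith
    also have "\<dots> = 8 * (B + 1) * X" by (simp add: algebra_simps)
    finally show ?thesis .
  qed
  finally have "nT (a # xs) T + 1 \<le> 8 * (B + 1) * X" .
  moreover have "prod_list (map (\<lambda>(x, b, B). 8 * (B + 1)) (a # xs)) * (T + 1) = 8 * (B + 1) * X"
    using a unfolding X_def by (simp add: algebra_simps)
  ultimately show ?case by metis
qed




fun avars :: "aexp \<Rightarrow> nat set" where
  "avars (N c) = {}"
| "avars (V x) = {x}"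
| "avars (Plus a b) = avars a \<union> avars b"
| "avars (Minus a b) = avars a \<union> avars b"

fun bvars :: "bexp \<Rightarrow> nat set" where
  "bvars (Bc v) = {}"
| "bvars (Less a b) = avars a \<union> avars b"
| "bvars (Eq a b) = avars a \<union> avars b"
| "bvars (Not b) = bvars b"
| "bvars (And b c) = bvars b \<union> bvars c"
| "bvars (Xor b c) = bvars b \<union> bvars c"
| "bvars (Cell a i j) = avars a \<union> avars i \<union> avars j"

lemma aval_cong: "(\<forall>y\<in>avars a. fst s y = fst s' y) \<Longrightarrow> aval a s = aval a s'"
  by (induction a) auto

lemma bval_cong: "snd s = snd s' \<Longrightarrow> (\<forall>y\<in>bvars b. fst s y = fst s' y) \<Longrightarrow> bval b s = bval b s'"
proof (induction b)
  case (Less a c)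
  thus ?case using aval_cong[of a s s'] aval_cong[of c s s'] by auto
next
  case (Eq a c)
  thus ?case using aval_cong[of a s s'] aval_cong[of c s s'] by auto
next
  case (Cell a i j)
  thus ?case using aval_cong[of a s s'] aval_cong[of i s s'] aval_cong[of j s s'] by auto
qed auto

definition RX :: "nat \<Rightarrow> nat" where "RX i = 6 * i + 6"
definition RG :: "nat \<Rightarrow> nat" where "RG i = 6 * i + 8"
definition RC :: "nat \<Rightarrow> nat" where "RC i = 6 * i + 10"

definition vb :: "nat \<Rightarrow> bexp" where
  "vb i = Xor (And (Eq (V (RX i)) (V 4)) (Eq (V (RG i)) (N 1)))
              (And (Not (Eq (V (RX i)) (V 4))) (Cell (N 0) (V 4) (V (RX i))))"

fun sumb :: "nat list \<Rightarrow> bexp" where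
  "sumb [] = Bc False"
| "sumb (i # is) = Xor (And (Eq (V (RC i)) (N 1)) (vb i)) (sumb is)"

definition cond :: "nat \<Rightarrow> bexp" where
  "cond k = Not (And (Not (Eq (V 4) (V 2))) (Xor (sumb [0..<k]) (Cell (N 0) (V 4) (V 2))))"

lemma bvars_sumb: "bvars (sumb is) \<subseteq> {y. even y}"
  by (induction "is") (auto simp: vb_def RX_def RG_def RC_def)

lemma bvars_cond: "bvars (cond k) \<subseteq> {y. even y}"
  using bvars_sumb[of "[0..<k]"] unfolding cond_def by auto

lemma indep_cond: "indep (bval (cond k)) {y. odd y}"
  unfolding indep_def
proof (intro allI impI)
  fix s s' :: state assume "snd s = snd s'" "\<forall>y. y \<notin> {y. odd y} \<longrightarrow> fst s y = fst s' y"
  thus "bval (cond k) s = bval (cond k) s'"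
    using bval_cong[of s s' "cond k"] bvars_cond[of k] by auto
qed

definition Ls :: "nat \<Rightarrow> (nat \<times> aexp \<times> nat) list" where "Ls n = [(4, V 0, n)]"
definition Js :: "nat \<Rightarrow> (nat \<times> aexp \<times> nat) list" where "Js n = [(2, V 0, n)]"
definition Cs :: "nat \<Rightarrow> (nat \<times> aexp \<times> nat) list" where "Cs k = map (\<lambda>i. (RC i, N 2, 2)) [0..<k]"
definition XGs :: "nat \<Rightarrow> nat \<Rightarrow> (nat \<times> aexp \<times> nat) list" where
  "XGs k n = map (\<lambda>i. (RX i, Plus (V 0) (N 1), n + 1)) [0..<k] @ map (\<lambda>i. (RG i, N 2, 2)) [0..<k]"

definition copy :: "nat \<Rightarrow> com" where "copy r = If (Eq (V r) (N 0)) (Assign 1 (N 0)) (Assign 1 (N 1))"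

definition inner :: "nat \<Rightarrow> nat \<Rightarrow> com" where
  "inner k n = nest True (XGs k n) (nest False (Js n) (nest True (Cs k) (nest False (Ls n) (base (cond k) 1) 1) 5) (nres (Cs k) 5)) 3"

definition prog :: "nat \<Rightarrow> nat \<Rightarrow> com" where
  "prog k n = Seq (inner k n) (copy (nres (XGs k n) 3))"

lemma nres_strip: "nres (map (\<lambda>(x, b, B). (x, b, 0)) xs) rb = nres xs rb"
  by (cases xs) auto

lemma nest_strip: "nest pol xs body rb = nest pol (map (\<lambda>(x, b, B). (x, b, 0)) xs) body rb"
  by (induction pol xs body rb rule: nest.induct) (simp_all add: nres_strip)


lemma reg_neq[simp]:
  "RX i \<noteq> RC j" "RX i \<noteq> Suc (RC j)" "Suc (RX i) \<noteq> RC j" "Suc (RX i) \<noteq> Suc (RC j)"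
  "RG i \<noteq> RC j" "RG i \<noteq> Suc (RC j)" "Suc (RG i) \<noteq> RC j" "Suc (RG i) \<noteq> Suc (RC j)"
  "RX i \<noteq> RG j" "RX i \<noteq> Suc (RG j)" "Suc (RX i) \<noteq> RG j" "Suc (RX i) \<noteq> Suc (RG j)"
  "RG i \<noteq> RX j" "RC i \<noteq> RX j" "RC i \<noteq> RG j"
  unfolding RX_def RG_def RC_def by presburger+

lemma reg_inj[simp]: "RX i = RX j \<longleftrightarrow> i = j" "RG i = RG j \<longleftrightarrow> i = j" "RC i = RC j \<longleftrightarrow> i = j"
  unfolding RX_def RG_def RC_def by auto

lemma reg_small[simp]:
  "RX i \<noteq> 0" "RX i \<noteq> 1" "RX i \<noteq> 2" "RX i \<noteq> 3" "RX i \<noteq> 4" "RX i \<noteq> 5"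
  "RG i \<noteq> 0" "RG i \<noteq> 1" "RG i \<noteq> 2" "RG i \<noteq> 3" "RG i \<noteq> 4" "RG i \<noteq> 5"
  "RC i \<noteq> 0" "RC i \<noteq> 1" "RC i \<noteq> 2" "RC i \<noteq> 3" "RC i \<noteq> 4" "RC i \<noteq> 5"
  "Suc (RX i) \<noteq> 1" "Suc (RX i) \<noteq> 3" "Suc (RX i) \<noteq> 5" "Suc (RX i) \<noteq> 2" "Suc (RX i) \<noteq> 4"
  "Suc (RG i) \<noteq> 1" "Suc (RG i) \<noteq> 3" "Suc (RG i) \<noteq> 5" "Suc (RG i) \<noteq> 2" "Suc (RG i) \<noteq> 4"
  "Suc (RC i) \<noteq> 1" "Suc (RC i) \<noteq> 3" "Suc (RC i) \<noteq> 5" "Suc (RC i) \<noteq> 2" "Suc (RC i) \<noteq> 4"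
  unfolding RX_def RG_def RC_def by auto

lemma reg_even[simp]: "even (RX i)" "even (RG i)" "even (RC i)"
  unfolding RX_def RG_def RC_def by auto

lemma comp_inner: "compt n (inner k n)
   (nW (XGs k n) (nW (Js n) (nW (Cs k) (nW (Ls n) {1})))) (nres (XGs k n) 3)
   (Qn True (XGs k n) (Qn False (Js n) (Qn True (Cs k) (Qn False (Ls n) (bval (cond k))))))
   (nT (XGs k n) (nT (Js n) (nT (Cs k) (nT (Ls n) 2))))"
proof -
  define P1 where "P1 = Qn False (Ls n) (bval (cond k))"
  define P2 where "P2 = Qn True (Cs k) P1"
  define P3 where "P3 = Qn False (Js n) P2"
  define W1 where "W1 = nW (Ls n) {1}"
  define W2 where "W2 = nW (Cs k) W1"
  define W3 where "W3 = nW (Js n) W2"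
  have W1e: "W1 = {1, 4, 5}" unfolding W1_def Ls_def by auto
  have W2e: "W2 = {1, 4, 5} \<union> RC ` {..<k} \<union> Suc ` RC ` {..<k}"
    unfolding W2_def W1e nW_eq Cs_def by (auto simp: image_image atLeast0LessThan)
  have W3e: "W3 = {1, 2, 3, 4, 5} \<union> RC ` {..<k} \<union> Suc ` RC ` {..<k}"
    unfolding W3_def W2e nW_eq Js_def by auto
  have i1: "indep P1 ({y. odd y} \<union> {4})"
    using indep_Qn[OF indep_cond, of False "Ls n"] unfolding P1_def Ls_def by simp
  have i2: "indep P2 ({y. odd y} \<union> {4} \<union> RC ` {..<k})"
    using indep_Qn[OF i1, of True "Cs k"] unfolding P2_def Cs_def by (simp add: image_image atLeast0LessThan)
  have i3: "indep P3 ({y. odd y} \<union> {4} \<union> RC ` {..<k} \<union> {2})"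
    using indep_Qn[OF i2, of False "Js n"] unfolding P3_def Js_def by simp
  have c1: "compt n (nest False (Ls n) (base (cond k) 1) 1) W1 5 P1 (nT (Ls n) 2)"
  proof -
    have "compt n (nest False (Ls n) (base (cond k) 1) 1) (nW (Ls n) {1}) (nres (Ls n) 1)
       (Qn False (Ls n) (bval (cond k))) (nT (Ls n) 2)"
    proof (rule comp_nest[OF comp_base])
      show "indep (bval (cond k)) ({1} \<union> Suc ` fst ` set (Ls n))"
        by (rule indep_mono[OF indep_cond]) (auto simp: Ls_def)
    qed (auto simp: Ls_def)
    thus ?thesis unfolding W1_def P1_def by (simp add: Ls_def)
  qed
  have c2: "compt n (nest True (Cs k) (nest False (Ls n) (base (cond k) 1) 1) 5) W2 (nres (Cs k) 5) P2
     (nT (Cs k) (nT (Ls n) 2))"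
    unfolding W2_def P2_def
  proof (rule comp_nest[OF c1])
    show "0 \<notin> W1" unfolding W1e by simp
    show "indep P1 (W1 \<union> Suc ` fst ` set (Cs k))"
      by (rule indep_mono[OF i1]) (auto simp: W1e Cs_def RC_def)
  qed (auto simp: W1e Cs_def distinct_map inj_on_def RC_def)
  have c3: "compt n (nest False (Js n) (nest True (Cs k) (nest False (Ls n) (base (cond k) 1) 1) 5) (nres (Cs k) 5))
     W3 3 P3 (nT (Js n) (nT (Cs k) (nT (Ls n) 2)))"
  proof -
    have "compt n (nest False (Js n) (nest True (Cs k) (nest False (Ls n) (base (cond k) 1) 1) 5) (nres (Cs k) 5))
     (nW (Js n) W2) (nres (Js n) (nres (Cs k) 5)) (Qn False (Js n) P2) (nT (Js n) (nT (Cs k) (nT (Ls n) 2)))"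
    proof (rule comp_nest[OF c2])
      show "0 \<notin> W2" unfolding W2e by auto
      show "indep P2 (W2 \<union> Suc ` fst ` set (Js n))"
        by (rule indep_mono[OF i2]) (auto simp: W2e Js_def RC_def)
    qed (auto simp: W2e Js_def RC_def)
    thus ?thesis unfolding W3_def P3_def by (simp add: Js_def)
  qed
  have c4: "compt n (nest True (XGs k n) (nest False (Js n) (nest True (Cs k) (nest False (Ls n) (base (cond k) 1) 1) 5) (nres (Cs k) 5)) 3)
     (nW (XGs k n) W3) (nres (XGs k n) 3) (Qn True (XGs k n) P3) (nT (XGs k n) (nT (Js n) (nT (Cs k) (nT (Ls n) 2))))"
  proof (rule comp_nest[OF c3])
    show "0 \<notin> W3" unfolding W3e by auto
    show "indep P3 (W3 \<union> Suc ` fst ` set (XGs k n))"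
      by (rule indep_mono[OF i3]) (auto simp: W3e XGs_def RC_def RX_def RG_def)
      have W3s: "W3 \<subseteq> {y. y < 6 \<or> y mod 6 = 4 \<or> y mod 6 = 5}" unfolding W3e by (auto simp: RC_def)
    show "\<forall>x\<in>fst ` set (XGs k n). even x \<and> x \<noteq> 0 \<and> x \<notin> W3 \<and> Suc x \<notin> W3"
    proof
      fix x assume "x \<in> fst ` set (XGs k n)"
      hence x: "even x" "x \<ge> 6" "x mod 6 = 0 \<or> x mod 6 = 2" unfolding XGs_def by (auto simp: RX_def RG_def)
      hence "Suc x mod 6 = 1 \<or> Suc x mod 6 = 3" by (auto simp: mod_Suc)
      thus "even x \<and> x \<noteq> 0 \<and> x \<notin> W3 \<and> Suc x \<notin> W3" using x W3s by auto
    qed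
    show "\<forall>(x, b, B)\<in>set (XGs k n). \<forall>s. fst s 0 = n \<longrightarrow> aval b s = B"
      unfolding XGs_def by auto
    show "distinct (map fst (XGs k n))"
      unfolding XGs_def by (auto simp: distinct_map inj_on_def)
  qed
  thus ?thesis unfolding inner_def P3_def P2_def P1_def W3_def W2_def W1_def .
qed


definition tm :: "bit mat \<Rightarrow> nat \<Rightarrow> nat \<Rightarrow> nat \<Rightarrow> nat \<Rightarrow> nat \<Rightarrow> bit" where
  "tm M n c x g l = of_bool (c = 1) * cv M n x (of_bool (g = 1)) l"

lemma snd_init: "snd (init_state n M) a i j = (a = 0 \<and> i < n \<and> j < n \<and> M $$ (i, j) = 1)"
  unfolding init_state_def by simp

lemma fst_init0: "fst (init_state n M) 0 = n"
  unfolding init_state_def by simp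

lemma vb_val:
  assumes "snd s = snd (init_state n M)"
  shows "bval (vb i) s \<longleftrightarrow> (if fst s (RX i) = fst s 4 then fst s (RG i) = 1
          else (fst s 4 < n \<and> fst s (RX i) < n \<and> M $$ (fst s 4, fst s (RX i)) = 1))"
  unfolding vb_def using assms by (auto simp: snd_init)

lemma of_bool_xor: "(of_bool (a \<noteq> b) :: bit) = of_bool a + of_bool b"
  by (cases a; cases b) auto

lemma of_bool_M: "(of_bool ((x::bit) = 1) :: bit) = x"
  using bit_cases2[of x] by auto

lemma term_val:
  assumes "snd s = snd (init_state n M)" "fst s 4 < n"
  shows "(of_bool (fst s (RC i) = 1 \<and> bval (vb i) s) :: bit) = tm M n (fst s (RC i)) (fst s (RX i)) (fst s (RG i)) (fst s 4)"
  using assms unfolding tm_def cv_def vb_val[OF assms(1)] by (auto simp: of_bool_M)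

lemma sumb_val:
  assumes "distinct is" "snd s = snd (init_state n M)" "fst s 4 < n"
  shows "(of_bool (bval (sumb is) s) :: bit) = (\<Sum>i\<in>set is. tm M n (fst s (RC i)) (fst s (RX i)) (fst s (RG i)) (fst s 4))"
  using assms(1)
proof (induction "is")
  case Nil
  then show ?case by simp
next
  case (Cons i "is")
  have "(of_bool (bval (sumb (i # is)) s) :: bit) = of_bool (fst s (RC i) = 1 \<and> bval (vb i) s) + of_bool (bval (sumb is) s)"
    by (simp add: of_bool_xor[symmetric])
  also have "\<dots> = tm M n (fst s (RC i)) (fst s (RX i)) (fst s (RG i)) (fst s 4) + (\<Sum>i\<in>set is. tm M n (fst s (RC i)) (fst s (RX i)) (fst s (RG i)) (fst s 4))"
    using term_val[OF assms(2,3)] Cons by simp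
  also have "\<dots> = (\<Sum>i\<in>set (i # is). tm M n (fst s (RC i)) (fst s (RX i)) (fst s (RG i)) (fst s 4))"
    using Cons.prems by (simp add: sum.insert)
  finally show ?case .
qed

lemma cond_val:
  assumes "snd s = snd (init_state n M)" "fst s 4 < n" "fst s 2 < n"
  shows "bval (cond k) s \<longleftrightarrow> (fst s 4 \<noteq> fst s 2 \<longrightarrow>
     (\<Sum>i<k. tm M n (fst s (RC i)) (fst s (RX i)) (fst s (RG i)) (fst s 4)) = M $$ (fst s 4, fst s 2))"
proof -
  have e: "(of_bool (bval (sumb [0..<k]) s) :: bit) = (\<Sum>i<k. tm M n (fst s (RC i)) (fst s (RX i)) (fst s (RG i)) (fst s 4))"
    using sumb_val[OF _ assms(1,2), of "[0..<k]"] by (simp add: atLeast0LessThan)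
  have "bval (sumb [0..<k]) s = (M $$ (fst s 4, fst s 2) = 1) \<longleftrightarrow>
       (of_bool (bval (sumb [0..<k]) s) :: bit) = M $$ (fst s 4, fst s 2)"
    using bit_cases2[of "M $$ (fst s 4, fst s 2)"] by (cases "bval (sumb [0..<k]) s") auto
  thus ?thesis unfolding cond_def e[symmetric] using assms by (auto simp: snd_init)
qed


lemma fst_setr: "fst (setr s W f) y = (if y \<in> W then f y else fst s y)"
  unfolding setr_def by simp
lemma snd_setr: "snd (setr s W f) = snd s"
  unfolding setr_def by simp
lemma fst_upd: "fst (upd s x v) y = (if y = x then v else fst s y)"
  unfolding upd_def by simp
lemma snd_upd: "snd (upd s x v) = snd s"
  unfolding upd_def by simp

lemma ball_map_upt: "(\<forall>p\<in>set (map F [0..<k]). R p) \<longleftrightarrow> (\<forall>i<k. R (F i))"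
  by auto

lemma PP_char:
  "Qn True (XGs k n) (Qn False (Js n) (Qn True (Cs k) (Qn False (Ls n) (bval (cond k))))) (init_state n M) \<longleftrightarrow>
   (\<exists>f. (\<forall>i<k. f (RX i) < n + 1 \<and> f (RG i) < 2) \<and> (\<forall>j<n. \<exists>g. (\<forall>i<k. g (RC i) < 2) \<and>
      (\<forall>l<n. l \<noteq> j \<longrightarrow> (\<Sum>i<k. tm M n (g (RC i)) (f (RX i)) (f (RG i)) l) = M $$ (l, j))))"
proof -
  define s0 where "s0 = init_state n M"
  define XV where "XV = RX ` {..<k} \<union> RG ` {..<k}"
  define CV where "CV = RC ` {..<k}"
  define S where "S f j g l = upd (setr (upd (setr s0 XV f) 2 j) CV g) 4 l" for f j g l
  have A: "Qn False (Ls n) P s = (\<forall>l<n. P (upd s 4 l))" for P s by (simp add: Ls_def Q_def)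
  have B: "Qn False (Js n) P s = (\<forall>j<n. P (upd s 2 j))" for P s by (simp add: Js_def Q_def)
  have C: "Qn True (Cs k) P s = (\<exists>g. (\<forall>i<k. g (RC i) < 2) \<and> P (setr s CV g))" for P s
  proof -
    have "distinct (map fst (Cs k))" by (simp add: Cs_def distinct_map inj_on_def)
    from Qn_char[OF this, of True P s] show ?thesis
      unfolding CV_def Cs_def by (simp only: ball_map_upt) (simp add: image_image atLeast0LessThan)
  qed
  have D: "Qn True (XGs k n) P s = (\<exists>f. (\<forall>i<k. f (RX i) < n + 1 \<and> f (RG i) < 2) \<and> P (setr s XV f))" for P s
  proof -
    have "distinct (map fst (XGs k n))" by (auto simp: XGs_def distinct_map inj_on_def)
    from Qn_char[OF this, of True P s] show ?thesis
      unfolding XV_def XGs_def by (simp only: set_append ball_Un ball_map_upt) (simp add: image_image atLeast0LessThan image_Un, blast)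
  qed
  have E: "bval (cond k) (S f j g l) = (l \<noteq> j \<longrightarrow> (\<Sum>i<k. tm M n (g (RC i)) (f (RX i)) (f (RG i)) l) = M $$ (l, j))"
    if "j < n" "l < n" for f j g l
  proof -
    have sn: "snd (S f j g l) = snd (init_state n M)" unfolding S_def s0_def by (simp add: snd_upd snd_setr)
    have f4: "fst (S f j g l) 4 = l" unfolding S_def by (simp add: fst_upd)
    have f2: "fst (S f j g l) 2 = j" unfolding S_def CV_def by (auto simp: fst_upd fst_setr)
    have fr: "fst (S f j g l) (RC i) = g (RC i)" "fst (S f j g l) (RX i) = f (RX i)" "fst (S f j g l) (RG i) = f (RG i)"
      if "i < k" for i
      using that unfolding S_def CV_def XV_def
      by (auto simp: fst_upd fst_setr dest: sym[of "RC _" "RX _"] sym[of "RC _" "RG _"])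
    have se: "(\<Sum>i<k. tm M n (fst (S f j g l) (RC i)) (fst (S f j g l) (RX i)) (fst (S f j g l) (RG i)) l)
       = (\<Sum>i<k. tm M n (g (RC i)) (f (RX i)) (f (RG i)) l)"
      by (rule sum.cong) (auto simp: fr)
    show ?thesis using cond_val[OF sn, of k] that f4 f2 se by simp
  qed
  have "Qn True (XGs k n) (Qn False (Js n) (Qn True (Cs k) (Qn False (Ls n) (bval (cond k))))) s0 \<longleftrightarrow>
     (\<exists>f. (\<forall>i<k. f (RX i) < n + 1 \<and> f (RG i) < 2) \<and> (\<forall>j<n. \<exists>g. (\<forall>i<k. g (RC i) < 2) \<and>
      (\<forall>l<n. bval (cond k) (S f j g l))))"
    by (simp add: A B C D S_def)
  also have "\<dots> \<longleftrightarrow> (\<exists>f. (\<forall>i<k. f (RX i) < n + 1 \<and> f (RG i) < 2) \<and> (\<forall>j<n. \<exists>g. (\<forall>i<k. g (RC i) < 2) \<and>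
      (\<forall>l<n. l \<noteq> j \<longrightarrow> (\<Sum>i<k. tm M n (g (RC i)) (f (RX i)) (f (RG i)) l) = M $$ (l, j))))"
    using E by (simp cong: imp_cong conj_cong)
  finally show ?thesis unfolding s0_def .
qed


lemma charPP:
  assumes M: "M \<in> carrier_mat n n"
  shows "minrank M \<le> k \<longleftrightarrow> (\<exists>f. (\<forall>i<k. f (RX i) < n + 1 \<and> f (RG i) < 2) \<and> (\<forall>j<n. \<exists>g. (\<forall>i<k. g (RC i) < 2) \<and>
      (\<forall>l<n. l \<noteq> j \<longrightarrow> (\<Sum>i<k. tm M n (g (RC i)) (f (RX i)) (f (RG i)) l) = M $$ (l, j))))"
proof
  assume "minrank M \<le> k"
  then obtain X G where XG: "\<forall>i<k. X i \<le> n"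
    and H: "\<forall>j<n. \<exists>C. \<forall>l<n. l \<noteq> j \<longrightarrow> (\<Sum>i<k. C i * cv M n (X i) (G i) l) = M $$ (l, j)"
    using minrank_le_only_if[OF M] by blast
  define f where "f y = (if y mod 6 = 0 then X (y div 6 - 1) else if G ((y - 8) div 6) = 1 then 1 else 0)" for y :: nat
  have fX: "f (RX i) = X i" for i unfolding f_def RX_def by simp
  have fG: "f (RG i) = (if G i = 1 then 1 else 0)" for i unfolding f_def RG_def by simp
  have oG: "(of_bool (f (RG i) = 1) :: bit) = G i" for i
    using fG[of i] bit_cases2[of "G i"] by (cases "G i = 1") auto
  show "\<exists>f. (\<forall>i<k. f (RX i) < n + 1 \<and> f (RG i) < 2) \<and> (\<forall>j<n. \<exists>g. (\<forall>i<k. g (RC i) < 2) \<and>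
      (\<forall>l<n. l \<noteq> j \<longrightarrow> (\<Sum>i<k. tm M n (g (RC i)) (f (RX i)) (f (RG i)) l) = M $$ (l, j)))"
  proof (rule exI[of _ f], rule conjI)
    show "\<forall>i<k. f (RX i) < n + 1 \<and> f (RG i) < 2" using XG fX fG by auto
    show "\<forall>j<n. \<exists>g. (\<forall>i<k. g (RC i) < 2) \<and>
      (\<forall>l<n. l \<noteq> j \<longrightarrow> (\<Sum>i<k. tm M n (g (RC i)) (f (RX i)) (f (RG i)) l) = M $$ (l, j))"
    proof (intro allI impI)
      fix j assume j: "j < n"
      obtain C where C: "\<forall>l<n. l \<noteq> j \<longrightarrow> (\<Sum>i<k. C i * cv M n (X i) (G i) l) = M $$ (l, j)"
        using H j by blast
      define g :: "nat \<Rightarrow> nat" where "g y = (if C ((y - 10) div 6) = 1 then 1 else 0)" for y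
      have gC: "g (RC i) = (if C i = 1 then 1 else 0)" for i unfolding g_def RC_def by simp
      have oC: "(of_bool (g (RC i) = 1) :: bit) = C i" for i
        using gC[of i] bit_cases2[of "C i"] zero_neq_one[where 'a=bit] by (cases "C i = 1") auto
      show "\<exists>g. (\<forall>i<k. g (RC i) < 2) \<and>
        (\<forall>l<n. l \<noteq> j \<longrightarrow> (\<Sum>i<k. tm M n (g (RC i)) (f (RX i)) (f (RG i)) l) = M $$ (l, j))"
      proof (rule exI[of _ g], rule conjI)
        show "\<forall>i<k. g (RC i) < 2" using gC by auto
        show "\<forall>l<n. l \<noteq> j \<longrightarrow> (\<Sum>i<k. tm M n (g (RC i)) (f (RX i)) (f (RG i)) l) = M $$ (l, j)"
        proof (intro allI impI)
          fix l assume "l < n" "l \<noteq> j"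
          have "(\<Sum>i<k. tm M n (g (RC i)) (f (RX i)) (f (RG i)) l) = (\<Sum>i<k. C i * cv M n (X i) (G i) l)"
            by (rule sum.cong) (simp only: tm_def oC oG fX)+
          thus "(\<Sum>i<k. tm M n (g (RC i)) (f (RX i)) (f (RG i)) l) = M $$ (l, j)" using C \<open>l < n\<close> \<open>l \<noteq> j\<close> by simp
        qed
      qed
    qed
  qed
next
  assume "\<exists>f. (\<forall>i<k. f (RX i) < n + 1 \<and> f (RG i) < 2) \<and> (\<forall>j<n. \<exists>g. (\<forall>i<k. g (RC i) < 2) \<and>
      (\<forall>l<n. l \<noteq> j \<longrightarrow> (\<Sum>i<k. tm M n (g (RC i)) (f (RX i)) (f (RG i)) l) = M $$ (l, j)))"
  then obtain f where f: "\<forall>j<n. \<exists>g. (\<forall>i<k. g (RC i) < 2) \<and>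
      (\<forall>l<n. l \<noteq> j \<longrightarrow> (\<Sum>i<k. tm M n (g (RC i)) (f (RX i)) (f (RG i)) l) = M $$ (l, j))" by blast
  show "minrank M \<le> k"
  proof (rule minrank_le_if[OF M, where k=k and X="\<lambda>i. f (RX i)" and G="\<lambda>i. of_bool (f (RG i) = 1)"], intro allI impI)
    fix j assume "j < n"
    then obtain g where g: "\<forall>l<n. l \<noteq> j \<longrightarrow> (\<Sum>i<k. tm M n (g (RC i)) (f (RX i)) (f (RG i)) l) = M $$ (l, j)"
      using f by blast
    show "\<exists>C. \<forall>l<n. l \<noteq> j \<longrightarrow> (\<Sum>i<k. C i * cv M n (f (RX i)) (of_bool (f (RG i) = 1)) l) = M $$ (l, j)"
      using g unfolding tm_def by (intro exI[of _ "\<lambda>i. of_bool (g (RC i) = 1)"]) simp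
  qed
qed

lemma prod_list_const: "prod_list (map (\<lambda>i. c) xs) = c ^ length xs"
  by (induction xs) auto

lemma time_bound:
  "nT (XGs k n) (nT (Js n) (nT (Cs k) (nT (Ls n) 2))) + 2 \<le> (8 * 16 ^ k * 24 ^ k * 24 ^ k * 24 + 1) * (n + 1) ^ (k + 4)"
proof -
  define P where "P = n + 1"
  define T1 where "T1 = nT (Ls n) 2"
  define T2 where "T2 = nT (Cs k) T1"
  define T3 where "T3 = nT (Js n) T2"
  define T4 where "T4 = nT (XGs k n) T3"
  have a: "T1 + 1 \<le> 24 * P" using nT_bound[of "Ls n" 2] unfolding T1_def P_def by (simp add: Ls_def)
  have b0: "T2 + 1 \<le> 24 ^ k * (T1 + 1)" using nT_bound[of "Cs k" T1] unfolding T2_def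
    by (simp add: Cs_def o_def prod_list_const)
  have b: "T2 + 1 \<le> 24 ^ k * (24 * P)" using b0 mult_le_mono2[OF a, of "24 ^ k"] by linarith
  have c0: "T3 + 1 \<le> 8 * P * (T2 + 1)" using nT_bound[of "Js n" T2] unfolding T3_def P_def by (simp add: Js_def)
  have c: "T3 + 1 \<le> 8 * P * (24 ^ k * (24 * P))" using c0 mult_le_mono2[OF b, of "8 * P"] by linarith
  have d0: "T4 + 1 \<le> (8 * (n + 2)) ^ k * 24 ^ k * (T3 + 1)" using nT_bound[of "XGs k n" T3] unfolding T4_def
    by (simp add: XGs_def o_def prod_list_const)
  have e: "(8 * (n + 2)) ^ k \<le> (16 * P) ^ k" by (rule power_mono) (auto simp: P_def)
  have d: "T4 + 1 \<le> (16 * P) ^ k * 24 ^ k * (8 * P * (24 ^ k * (24 * P)))"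
  proof -
    have "(8 * (n + 2)) ^ k * 24 ^ k * (T3 + 1) \<le> (16 * P) ^ k * 24 ^ k * (8 * P * (24 ^ k * (24 * P)))"
      by (intro mult_le_mono e c order.refl)
    thus ?thesis using d0 by linarith
  qed
  have f: "(16 * P) ^ k * 24 ^ k * (8 * P * (24 ^ k * (24 * P))) = (8 * 16 ^ k * 24 ^ k * 24 ^ k * 24) * P ^ (k + 2)"
    by (simp add: power_mult_distrib power_add algebra_simps power2_eq_square)
  have g: "P ^ (k + 2) \<le> P ^ (k + 4)" by (rule power_increasing) (auto simp: P_def)
  have h: "1 \<le> P ^ (k + 4)" by (simp add: P_def)
  have "T4 + 2 \<le> (8 * 16 ^ k * 24 ^ k * 24 ^ k * 24) * P ^ (k + 4) + 1"
    using d f mult_le_mono2[OF g, of "8 * 16 ^ k * 24 ^ k * 24 ^ k * 24"] by linarith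
  also have "\<dots> \<le> (8 * 16 ^ k * 24 ^ k * 24 ^ k * 24 + 1) * P ^ (k + 4)" using h by (simp add: algebra_simps)
  finally show ?thesis unfolding T4_def T3_def T2_def T1_def P_def .
qed


lemma prog_n: "prog k n = prog k 0"
proof -
  have sX: "map (\<lambda>(x, b, B). (x, b, 0)) (XGs k n) = map (\<lambda>(x, b, B). (x, b, 0)) (XGs k 0)"
    by (simp add: XGs_def)
  have sJ: "map (\<lambda>(x, b, B). (x, b, 0)) (Js n) = map (\<lambda>(x, b, B). (x, b, 0)) (Js 0)"
    by (simp add: Js_def)
  have sL: "map (\<lambda>(x, b, B). (x, b, 0)) (Ls n) = map (\<lambda>(x, b, B). (x, b, 0)) (Ls 0)"
    by (simp add: Ls_def)
  have eX: "nest pol (XGs k n) body rb = nest pol (XGs k 0) body rb" for pol body rb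
    by (metis nest_strip sX)
  have eJ: "nest pol (Js n) body rb = nest pol (Js 0) body rb" for pol body rb
    by (metis nest_strip sJ)
  have eL: "nest pol (Ls n) body rb = nest pol (Ls 0) body rb" for pol body rb
    by (metis nest_strip sL)
  have eR: "nres (XGs k n) 3 = nres (XGs k 0) 3"
    by (metis nres_strip sX)
  show ?thesis unfolding prog_def inner_def eX eJ eL eR ..
qed

lemma copy_step: "big_step (copy r) s 2 ((fst s)(1 := (if fst s r = 0 then 0 else 1)), snd s)"
  unfolding copy_def
proof (cases "fst s r = 0")
  case True
  thus "big_step (If (Eq (V r) (N 0)) (Assign 1 (N 0)) (Assign 1 (N 1))) s 2 ((fst s)(1 := (if fst s r = 0 then 0 else 1)), snd s)"
    by (intro IfTrue'[OF _ Assign']) auto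
next
  case False
  thus "big_step (If (Eq (V r) (N 0)) (Assign 1 (N 0)) (Assign 1 (N 1))) s 2 ((fst s)(1 := (if fst s r = 0 then 0 else 1)), snd s)"
    by (intro IfFalse'[OF _ Assign']) auto
qed

theorem theorem1:
  fixes k :: nat
  shows "\<exists>(P :: com) (C :: nat). \<forall>(n :: nat) (M :: bit mat). M \<in> carrier_mat n n \<longrightarrow>
           (\<exists>t s'. big_step P (init_state n M) t s' \<and> t \<le> C * (n + 1) ^ (k + 4) \<and>
                   (accepts s' \<longleftrightarrow> minrank M \<le> k))"
proof (rule exI[of _ "prog k 0"], rule exI[of _ "8 * 16 ^ k * 24 ^ k * 24 ^ k * 24 + 1"], intro allI impI)
  fix n :: nat and M :: "bit mat"
  assume M: "M \<in> carrier_mat n n"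
  define r where "r = nres (XGs k n) 3"
  define PP where "PP = Qn True (XGs k n) (Qn False (Js n) (Qn True (Cs k) (Qn False (Ls n) (bval (cond k)))))"
  obtain t s' where ts: "big_step (inner k n) (init_state n M) t s'"
    "t \<le> nT (XGs k n) (nT (Js n) (nT (Cs k) (nT (Ls n) 2)))"
    "fst s' r \<noteq> 0 \<longleftrightarrow> PP (init_state n M)"
    using comp_inner[of n k] fst_init0[of n M] unfolding compt_def r_def PP_def by blast
  define s'' where "s'' = ((fst s')(1 := (if fst s' r = 0 then 0 else 1)), snd s')"
  have "big_step (prog k n) (init_state n M) (t + 2) s''"
    unfolding prog_def r_def[symmetric] s''_def by (rule Seq'[OF ts(1) copy_step]) simp
  hence bs: "big_step (prog k 0) (init_state n M) (t + 2) s''" using prog_n[of k n] by simp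
  have "accepts s'' \<longleftrightarrow> fst s' r \<noteq> 0" unfolding accepts_def s''_def by simp
  also have "\<dots> \<longleftrightarrow> PP (init_state n M)" by (rule ts(3))
  also have "\<dots> \<longleftrightarrow> minrank M \<le> k" unfolding PP_def
    by (rule trans[OF PP_char charPP[OF M, symmetric]])
  finally have acc: "accepts s'' \<longleftrightarrow> minrank M \<le> k" .
  have "t + 2 \<le> (8 * 16 ^ k * 24 ^ k * 24 ^ k * 24 + 1) * (n + 1) ^ (k + 4)"
    using ts(2) time_bound[of k n] by linarith
  thus "\<exists>t s'. big_step (prog k 0) (init_state n M) t s' \<and> t \<le> (8 * 16 ^ k * 24 ^ k * 24 ^ k * 24 + 1) * (n + 1) ^ (k + 4) \<and>
                   (accepts s' \<longleftrightarrow> minrank M \<le> k)"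
    using bs acc by blast
qed


end
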